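(* Let $F\colon\mathbb{N}\to(0,\infty)$ be strictly monotone with $\sum_{k=1}^\infty 1/F(k)<\infty$. Let $\Xi(0)\in\mathbb{N}$, let $\tau(k)$, $k\ge\Xi(0)$, be independent with $\tau(k)$ exponential of rate $F(k)$, let $g_k$ denote the density of $T(k)=\sum_{l=\Xi(0)}^k\tau(l)$ and $g$ the density of $T=\sum_{l=\Xi(0)}^\infty\tau(l)$. Then for any $t_0>0$, $$\frac{g_k(t)}{g(t)}\to1\quad\text{as }k\to\infty,\ \text{uniformly in }t\ge t_0.$$
   Context: $\mathbb{N}=\{1,2,\dots\}$. $T$ is the explosion time of the pure birth process started at $\Xi(0)$ that jumps from $k$ to $k+1$ at rate $F(k)$; $T(k)$ is its first passage time past level $k$. *)

theory Defs
  imports "HOL-Probability.Probability"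
begin

end

theory Submission
  imports Defs
begin

lemma (in prob_space) indep_nn_pair:
  fixes X Y :: "'a \<Rightarrow> real" and f :: "real \<times> real \<Rightarrow> ennreal"
  assumes ind: "indep_var borel X borel Y" and f[measurable]: "f \<in> borel_measurable (borel \<Otimes>\<^sub>M borel)"
  shows "(\<integral>\<^sup>+\<omega>. f (X \<omega>, Y \<omega>) \<partial>M) = (\<integral>\<^sup>+\<omega>. \<integral>\<^sup>+\<omega>'. f (X \<omega>', Y \<omega>) \<partial>M \<partial>M)"
proof -
  have rvX[measurable]: "random_variable borel X" and rvY[measurable]: "random_variable borel Y"
    using indep_var_rv1[OF ind] indep_var_rv2[OF ind] by auto
  have eq: "distr M borel X \<Otimes>\<^sub>M distr M borel Y = distr M (borel \<Otimes>\<^sub>M borel) (\<lambda>x. (X x, Y x))"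
    using ind unfolding indep_var_distribution_eq by auto
  interpret DX: prob_space "distr M borel X" by (rule prob_space_distr) simp
  interpret DY: prob_space "distr M borel Y" by (rule prob_space_distr) simp
  interpret P: pair_sigma_finite "distr M borel X" "distr M borel Y" ..
  have "(\<integral>\<^sup>+\<omega>. f (X \<omega>, Y \<omega>) \<partial>M) = (\<integral>\<^sup>+z. f z \<partial>distr M (borel \<Otimes>\<^sub>M borel) (\<lambda>x. (X x, Y x)))"
    by (subst nn_integral_distr) auto
  also have "\<dots> = (\<integral>\<^sup>+z. f z \<partial>(distr M borel X \<Otimes>\<^sub>M distr M borel Y))"
    by (simp add: eq)
  also have "\<dots> = (\<integral>\<^sup>+ y. (\<integral>\<^sup>+ x. f (x, y) \<partial>distr M borel X) \<partial>distr M borel Y)"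
    by (rule P.nn_integral_snd[symmetric]) simp
  also have "\<dots> = (\<integral>\<^sup>+ \<omega>. (\<integral>\<^sup>+ x. f (x, Y \<omega>) \<partial>distr M borel X) \<partial>M)"
    by (subst nn_integral_distr) (auto intro!: DX.borel_measurable_nn_integral)
  also have "\<dots> = (\<integral>\<^sup>+\<omega>. \<integral>\<^sup>+\<omega>'. f (X \<omega>', Y \<omega>) \<partial>M \<partial>M)"
    by (subst nn_integral_distr) auto
  finally show ?thesis .
qed

lemma (in prob_space) indep_nn_prod:
  fixes X Y :: "'a \<Rightarrow> real" and u v :: "real \<Rightarrow> ennreal"
  assumes ind: "indep_var borel X borel Y" and [measurable]: "u \<in> borel_measurable borel" "v \<in> borel_measurable borel"
  shows "(\<integral>\<^sup>+\<omega>. u (X \<omega>) * v (Y \<omega>) \<partial>M) = (\<integral>\<^sup>+\<omega>. u (X \<omega>) \<partial>M) * (\<integral>\<^sup>+\<omega>. v (Y \<omega>) \<partial>M)"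
proof -
  have rvX[measurable]: "random_variable borel X" and rvY[measurable]: "random_variable borel Y"
    using indep_var_rv1[OF ind] indep_var_rv2[OF ind] by auto
  have "(\<integral>\<^sup>+\<omega>. u (X \<omega>) * v (Y \<omega>) \<partial>M) = (\<integral>\<^sup>+\<omega>. (\<lambda>z. u (fst z) * v (snd z)) (X \<omega>, Y \<omega>) \<partial>M)"
    by simp
  also have "\<dots> = (\<integral>\<^sup>+\<omega>. \<integral>\<^sup>+\<omega>'. u (X \<omega>') * v (Y \<omega>) \<partial>M \<partial>M)"
    by (subst indep_nn_pair[OF ind]) auto
  also have "\<dots> = (\<integral>\<^sup>+\<omega>. (\<integral>\<^sup>+\<omega>'. u (X \<omega>') \<partial>M) * v (Y \<omega>) \<partial>M)"
    by (intro nn_integral_cong nn_integral_multc) auto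
  also have "\<dots> = (\<integral>\<^sup>+\<omega>. u (X \<omega>) \<partial>M) * (\<integral>\<^sup>+\<omega>. v (Y \<omega>) \<partial>M)"
    by (subst nn_integral_cmult) (auto simp: mult.commute)
  finally show ?thesis .
qed

lemma (in prob_space) distributed_add_indep:
  fixes X Y :: "'a \<Rightarrow> real" and p :: "real \<Rightarrow> ennreal"
  assumes ind: "indep_var borel X borel Y" and X: "distributed M lborel X p"
  shows "distributed M lborel (\<lambda>\<omega>. X \<omega> + Y \<omega>) (\<lambda>t. \<integral>\<^sup>+\<omega>. p (t - Y \<omega>) \<partial>M)"
proof -
  have rvX[measurable]: "random_variable borel X" and rvY[measurable]: "random_variable borel Y"
    using indep_var_rv1[OF ind] indep_var_rv2[OF ind] by auto
  have p[measurable]: "p \<in> borel_measurable borel"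
    using distributed_borel_measurable[OF X] by simp
  interpret sigma_finite_measure M ..
  interpret PS: pair_sigma_finite M lborel ..
  have q[measurable]: "(\<lambda>t. \<integral>\<^sup>+\<omega>. p (t - Y \<omega>) \<partial>M) \<in> borel_measurable borel"
    by measurable
  have "distr M lborel (\<lambda>\<omega>. X \<omega> + Y \<omega>) = density lborel (\<lambda>t. \<integral>\<^sup>+\<omega>. p (t - Y \<omega>) \<partial>M)"
  proof (rule measure_eqI)
    fix A assume "A \<in> sets (distr M lborel (\<lambda>\<omega>. X \<omega> + Y \<omega>))"
    then have A[measurable]: "A \<in> sets borel" by simp
    have "emeasure (distr M lborel (\<lambda>\<omega>. X \<omega> + Y \<omega>)) A = (\<integral>\<^sup>+\<omega>. indicator A (X \<omega> + Y \<omega>) \<partial>M)"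
      by (subst emeasure_distr) (auto simp flip: nn_integral_indicator intro!: nn_integral_cong split: split_indicator)
    also have "\<dots> = (\<integral>\<^sup>+\<omega>. (\<lambda>z. indicator A (fst z + snd z)) (X \<omega>, Y \<omega>) \<partial>M)"
      by simp
    also have "\<dots> = (\<integral>\<^sup>+\<omega>. \<integral>\<^sup>+\<omega>'. indicator A (X \<omega>' + Y \<omega>) \<partial>M \<partial>M)"
      by (subst indep_nn_pair[OF ind]) auto
    also have "\<dots> = (\<integral>\<^sup>+\<omega>. \<integral>\<^sup>+x. p x * indicator A (x + Y \<omega>) \<partial>lborel \<partial>M)"
      by (intro nn_integral_cong distributed_nn_integral[OF X, symmetric]) auto
    also have "\<dots> = (\<integral>\<^sup>+\<omega>. \<integral>\<^sup>+t. p (t - Y \<omega>) * indicator A t \<partial>lborel \<partial>M)"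
    proof (rule nn_integral_cong)
      fix \<omega>
      have [measurable]: "(\<lambda>x. p x * indicator A (x + Y \<omega>)) \<in> borel_measurable borel" by measurable
      show "(\<integral>\<^sup>+x. p x * indicator A (x + Y \<omega>) \<partial>lborel) = (\<integral>\<^sup>+t. p (t - Y \<omega>) * indicator A t \<partial>lborel)"
        using nn_integral_real_affine[where c=1 and t="- Y \<omega>" and f="\<lambda>x. p x * indicator A (x + Y \<omega>)"]
        by simp
    qed
    also have "\<dots> = (\<integral>\<^sup>+t. \<integral>\<^sup>+\<omega>. p (t - Y \<omega>) * indicator A t \<partial>M \<partial>lborel)"
      by (rule PS.Fubini'[symmetric]) measurable
    also have "\<dots> = (\<integral>\<^sup>+t. (\<integral>\<^sup>+\<omega>. p (t - Y \<omega>) \<partial>M) * indicator A t \<partial>lborel)"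
      by (intro nn_integral_cong nn_integral_multc) auto
    also have "\<dots> = emeasure (density lborel (\<lambda>t. \<integral>\<^sup>+\<omega>. p (t - Y \<omega>) \<partial>M)) A"
      by (subst emeasure_density) auto
    finally show "emeasure (distr M lborel (\<lambda>\<omega>. X \<omega> + Y \<omega>)) A = emeasure (density lborel (\<lambda>t. \<integral>\<^sup>+\<omega>. p (t - Y \<omega>) \<partial>M)) A" .
  qed simp
  then show ?thesis unfolding distributed_def by simp
qed


lemma cont_ae_le:
  fixes f h :: "real \<Rightarrow> real"
  assumes U: "open U" and cf: "continuous_on U f" and ch: "continuous_on U h"
    and ae: "AE t in lborel. t \<in> U \<longrightarrow> f t \<le> h t"
  shows "\<forall>t\<in>U. f t \<le> h t"
proof (rule ccontr)
  assume "\<not> (\<forall>t\<in>U. f t \<le> h t)"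
  then obtain t where t: "t \<in> U" "h t < f t" using not_le by blast
  have "continuous_on U (\<lambda>s. f s - h s)" using cf ch by (intro continuous_intros)
  then have "open ((\<lambda>s. f s - h s) -` {0<..} \<inter> U)"
    using continuous_on_open_vimage[OF U] open_greaterThan by blast
  moreover have "t \<in> (\<lambda>s. f s - h s) -` {0<..} \<inter> U" using t by auto
  ultimately obtain e where e: "e > 0" "ball t e \<subseteq> (\<lambda>s. f s - h s) -` {0<..} \<inter> U"
    by (meson open_contains_ball)
  from ae obtain N where N: "{x \<in> space lborel. \<not> (x \<in> U \<longrightarrow> f x \<le> h x)} \<subseteq> N" "emeasure lborel N = 0" "N \<in> sets lborel"
    by (rule AE_E)
  have "ball t e \<subseteq> N"
  proof
    fix x assume x: "x \<in> ball t e"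
    then have "x \<in> U" "h x < f x" using e by auto
    then show "x \<in> N" using N(1) by auto
  qed
  then have "emeasure lborel (ball t e) \<le> emeasure lborel N"
    using N by (intro emeasure_mono) auto
  also have "\<dots> = 0" using N by auto
  finally have "emeasure lborel (ball t e) = 0" by simp
  moreover have "ball t e = {t - e <..< t + e}"
    by (auto simp: ball_def dist_real_def)
  ultimately show False using e by simp
qed

lemma cont_ae_eq:
  fixes f h :: "real \<Rightarrow> real"
  assumes U: "open U" and cf: "continuous_on U f" and ch: "continuous_on U h"
    and ae: "AE t in lborel. t \<in> U \<longrightarrow> f t = h t"
  shows "\<forall>t\<in>U. f t = h t"
proof -
  have "\<forall>t\<in>U. f t \<le> h t" by (rule cont_ae_le[OF U cf ch]) (use ae in auto)
  moreover have "\<forall>t\<in>U. h t \<le> f t" by (rule cont_ae_le[OF U ch cf]) (use ae in auto)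
  ultimately show ?thesis by force
qed

lemma ratio_bound:
  fixes G gg A B e :: real
  assumes G: "G > 0" and lo: "A * G \<le> gg" and up: "gg \<le> B * G"
    and A: "A > 1 / (1 + e)" and B: "B < 1 + e" and e: "0 < e" "e < 1"
  shows "\<bar>G / gg - 1\<bar> < e"
proof -
  have Apos: "A > 0" using A e by (smt (verit) divide_pos_pos)
  have gpos: "gg > 0" using Apos G lo by (smt (verit) mult_pos_pos)
  have Bpos: "B > 0" using up gpos G by (smt (verit) mult_nonpos_nonneg mult_le_0_iff)
  have "G / gg \<le> G / (A * G)" using lo Apos G gpos by (intro divide_left_mono) auto
  also have "\<dots> = 1 / A" using G by simp
  also have "\<dots> < 1 + e"
  proof -
    have "1 < A * (1 + e)" using A e by (simp add: field_simps)
    then show ?thesis using Apos e by (simp add: field_simps)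
  qed
  finally have u: "G / gg < 1 + e" .
  have "1 - e < 1 / B"
  proof -
    have "(1 - e) * B < (1 - e) * (1 + e)" using B e by (intro mult_strict_left_mono) auto
    also have "\<dots> \<le> 1" by (simp add: algebra_simps)
    finally show ?thesis using Bpos by (simp add: field_simps)
  qed
  also have "1 / B = G / (B * G)" using G by simp
  also have "\<dots> \<le> G / gg" using up G gpos by (intro divide_left_mono) auto
  finally have l: "1 - e < G / gg" .
  show ?thesis using u l by linarith
qed

lemma eta_ineq: "0 < (e::real) \<Longrightarrow> e < 1 \<Longrightarrow> 1 / (1 + e) < (1 - e/4) * (1 - e/4)"
proof -
  assume e: "0 < e" "e < 1"
  have "(1 - e/4) * (1 - e/4) * (1 + e) = 1 + e * (8 - 7 * e) / 16 + e * e * e / 16"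
    by (simp add: field_simps)
  moreover have "e * (8 - 7 * e) / 16 > 0" using e by simp
  moreover have "e * e * e / 16 \<ge> 0" using e by simp
  ultimately have "1 < (1 - e/4) * (1 - e/4) * (1 + e)" by linarith
  then show ?thesis using e by (simp add: field_simps)
qed

locale expo_setup = prob_space M for M :: "'a measure" +
  fixes F :: "nat \<Rightarrow> real" and x0 :: nat and \<tau> :: "nat \<Rightarrow> 'a \<Rightarrow> real"
  assumes Fpos: "\<forall>k\<ge>1. F k > 0"
    and Fmono: "strict_mono_on {1..} F"
    and Fsum: "summable (\<lambda>k. 1 / F (k + 1))"
    and x0: "x0 \<ge> 1"
    and indep: "indep_vars (\<lambda>_. borel) \<tau> {x0..}"
    and expo: "\<forall>k\<ge>x0. distributed M lborel (\<tau> k) (\<lambda>x. ennreal (exponential_density (F k) x))"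
begin

definition "c = F x0"

lemma F_pos: "l \<ge> x0 \<Longrightarrow> F l > 0"
  using Fpos x0 by auto

lemma c_pos: "c > 0" using F_pos by (simp add: c_def)

lemma F_gt_c: "l > x0 \<Longrightarrow> F l > c"
  using Fmono x0 unfolding c_def strict_mono_on_def by auto

lemma rv_tau[measurable]: "l \<ge> x0 \<Longrightarrow> random_variable borel (\<tau> l)"
  using expo distributed_measurable[of M lborel "\<tau> l"] by (auto simp: measurable_lborel1)

lemma tau_nonneg_AE: "l \<ge> x0 \<Longrightarrow> AE \<omega> in M. 0 \<le> \<tau> l \<omega>"
proof -
  assume l: "l \<ge> x0"
  have D: "distributed M lborel (\<tau> l) (\<lambda>x. ennreal (exponential_density (F l) x))" using expo l by auto
  have "(AE \<omega> in M. 0 \<le> \<tau> l \<omega>) \<longleftrightarrow> (AE x in lborel. 0 < ennreal (exponential_density (F l) x) \<longrightarrow> 0 \<le> x)"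
    by (rule distributed_AE2[OF D]) measurable
  moreover have "AE x in lborel. 0 < ennreal (exponential_density (F l) x) \<longrightarrow> 0 \<le> x"
    by (auto simp: exponential_density_def)
  ultimately show ?thesis by simp
qed

lemma tau_nonneg_AE_all: "AE \<omega> in M. \<forall>l\<ge>x0. 0 \<le> \<tau> l \<omega>"
proof -
  have "AE \<omega> in M. \<forall>l. l \<ge> x0 \<longrightarrow> 0 \<le> \<tau> l \<omega>"
    by (subst AE_all_countable) (auto intro: tau_nonneg_AE)
  then show ?thesis by simp
qed

lemma E_tau: "l \<ge> x0 \<Longrightarrow> (\<integral>\<^sup>+\<omega>. ennreal (\<tau> l \<omega>) \<partial>M) = ennreal (1 / F l)"
proof -
  assume l: "l \<ge> x0"
  have D: "distributed M lborel (\<tau> l) (\<lambda>x. ennreal (exponential_density (F l) x))" using expo l by auto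
  have "(\<integral>\<^sup>+\<omega>. ennreal (\<tau> l \<omega>) \<partial>M) = (\<integral>\<^sup>+x. ennreal (exponential_density (F l) x) * ennreal x \<partial>lborel)"
    by (rule distributed_nn_integral[OF D, symmetric]) measurable
  also have "\<dots> = (\<integral>\<^sup>+x. ennreal (erlang_density 0 (F l) x * x ^ 1) \<partial>lborel)"
  proof (intro nn_integral_cong)
    fix x :: real
    show "ennreal (exponential_density (F l) x) * ennreal x = ennreal (erlang_density 0 (F l) x * x ^ 1)"
    proof (cases "x < 0")
      case True then show ?thesis by (simp add: exponential_density_def)
    next
      case False
      have "0 \<le> F l * exp (- (x * F l))" using F_pos[OF l] by simp
      then show ?thesis using False by (simp add: exponential_density_def ennreal_mult[symmetric])
    qed
  qed
  also have "\<dots> = ennreal (1 / F l)"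
    using F_pos[OF l] by (subst nn_integral_erlang_ith_moment) auto
  finally show ?thesis .
qed

lemma E_exp_tau: "l > x0 \<Longrightarrow> (\<integral>\<^sup>+\<omega>. ennreal (exp (c * \<tau> l \<omega>)) \<partial>M) = ennreal (F l / (F l - c))"
proof -
  assume l: "l > x0"
  have D: "distributed M lborel (\<tau> l) (\<lambda>x. ennreal (exponential_density (F l) x))" using expo l by auto
  have Fc: "F l - c > 0" using F_gt_c[OF l] by simp
  have "(\<integral>\<^sup>+\<omega>. ennreal (exp (c * \<tau> l \<omega>)) \<partial>M) = (\<integral>\<^sup>+x. ennreal (exponential_density (F l) x) * ennreal (exp (c * x)) \<partial>lborel)"
    by (rule distributed_nn_integral[OF D, symmetric]) measurable
  also have "\<dots> = (\<integral>\<^sup>+x. ennreal (F l / (F l - c)) * ennreal (erlang_density 0 (F l - c) x * x ^ 0) \<partial>lborel)"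
  proof (intro nn_integral_cong)
    fix x :: real
    show "ennreal (exponential_density (F l) x) * ennreal (exp (c * x)) = ennreal (F l / (F l - c)) * ennreal (erlang_density 0 (F l - c) x * x ^ 0)"
    proof (cases "x < 0")
      case True then show ?thesis by (simp add: exponential_density_def)
    next
      case False
      have "exponential_density (F l) x * exp (c * x) = F l / (F l - c) * (erlang_density 0 (F l - c) x * x ^ 0)"
        using False Fc by (simp add: exponential_density_def exp_diff exp_minus field_simps)
      then show ?thesis using False Fc F_pos[of l] l
        by (simp add: ennreal_mult[symmetric] exponential_density_def)
    qed
  qed
  also have "\<dots> = ennreal (F l / (F l - c)) * (\<integral>\<^sup>+x. ennreal (erlang_density 0 (F l - c) x * x ^ 0) \<partial>lborel)"
    by (rule nn_integral_cmult) measurable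
  also have "\<dots> = ennreal (F l / (F l - c))"
    using Fc by (subst nn_integral_erlang_ith_moment) auto
  finally show ?thesis .
qed


lemma summable_invF: "j \<ge> 1 \<Longrightarrow> summable (\<lambda>l. 1 / F (j + l))"
proof -
  assume j: "j \<ge> 1"
  have "summable (\<lambda>l. 1 / F ((l + (j - 1)) + 1))"
    using Fsum by (subst summable_iff_shift[where f="\<lambda>k. 1 / F (k + 1)"])
  moreover have "(\<lambda>l. 1 / F ((l + (j - 1)) + 1)) = (\<lambda>l. 1 / F (j + l))"
    using j by (intro ext) (simp add: algebra_simps)
  ultimately show ?thesis by simp
qed

lemma tail_summable_AE:
  assumes j: "j \<ge> x0"
  shows "AE \<omega> in M. summable (\<lambda>l. \<tau> (j + l) \<omega>)"
    and "(\<integral>\<^sup>+\<omega>. ennreal (\<Sum>l. \<tau> (j + l) \<omega>) \<partial>M) = ennreal (\<Sum>l. 1 / F (j + l))"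
proof -
  have sF: "summable (\<lambda>l. 1 / F (j + l))" using summable_invF j x0 by auto
  have nnF: "\<And>l. 0 \<le> 1 / F (j + l)" using F_pos j by (simp add: less_imp_le)
  have meas: "(\<lambda>\<omega>. \<Sum>l. ennreal (\<tau> (j + l) \<omega>)) \<in> borel_measurable M"
    using j by (intro borel_measurable_suminf_order) auto
  have I: "(\<integral>\<^sup>+\<omega>. (\<Sum>l. ennreal (\<tau> (j + l) \<omega>)) \<partial>M) = ennreal (\<Sum>l. 1 / F (j + l))"
  proof -
    have "(\<integral>\<^sup>+\<omega>. (\<Sum>l. ennreal (\<tau> (j + l) \<omega>)) \<partial>M) = (\<Sum>l. \<integral>\<^sup>+\<omega>. ennreal (\<tau> (j + l) \<omega>) \<partial>M)"
      using j by (intro nn_integral_suminf) auto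
    also have "\<dots> = (\<Sum>l. ennreal (1 / F (j + l)))"
      using j by (intro suminf_cong E_tau) auto
    also have "\<dots> = ennreal (\<Sum>l. 1 / F (j + l))"
      by (rule suminf_ennreal2[OF nnF sF])
    finally show ?thesis .
  qed
  have AEfin: "AE \<omega> in M. (\<Sum>l. ennreal (\<tau> (j + l) \<omega>)) \<noteq> \<infinity>"
    by (rule nn_integral_PInf_AE[OF meas]) (simp add: I)
  have AE1: "AE \<omega> in M. summable (\<lambda>l. \<tau> (j + l) \<omega>) \<and> ennreal (\<Sum>l. \<tau> (j + l) \<omega>) = (\<Sum>l. ennreal (\<tau> (j + l) \<omega>))"
    using AEfin tau_nonneg_AE_all
  proof eventually_elim
    case (elim \<omega>)
    then have nn: "\<And>l. 0 \<le> \<tau> (j + l) \<omega>" using j by auto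
    have s: "summable (\<lambda>l. \<tau> (j + l) \<omega>)"
      by (rule summable_suminf_not_top[OF nn]) (use elim in simp)
    then show ?case using suminf_ennreal2[OF nn s] by simp
  qed
  then show "AE \<omega> in M. summable (\<lambda>l. \<tau> (j + l) \<omega>)" by auto
  have "(\<integral>\<^sup>+\<omega>. ennreal (\<Sum>l. \<tau> (j + l) \<omega>) \<partial>M) = (\<integral>\<^sup>+\<omega>. (\<Sum>l. ennreal (\<tau> (j + l) \<omega>)) \<partial>M)"
    using AE1 by (intro nn_integral_cong_AE) auto
  then show "(\<integral>\<^sup>+\<omega>. ennreal (\<Sum>l. \<tau> (j + l) \<omega>) \<partial>M) = ennreal (\<Sum>l. 1 / F (j + l))"
    using I by simp
qed

definition S1 :: "nat \<Rightarrow> 'a \<Rightarrow> real" where "S1 k \<omega> = (\<Sum>l\<in>{Suc x0..k}. \<tau> l \<omega>)"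
definition S2 :: "nat \<Rightarrow> 'a \<Rightarrow> real" where "S2 k \<omega> = (\<Sum>l\<in>{Suc (Suc x0)..k}. \<tau> l \<omega>)"
definition R :: "nat \<Rightarrow> 'a \<Rightarrow> real" where "R k \<omega> = (\<Sum>l. \<tau> (Suc k + l) \<omega>)"

lemma rv_S1[measurable]: "random_variable borel (S1 k)"
  unfolding S1_def by (intro borel_measurable_sum) auto
lemma rv_S2[measurable]: "random_variable borel (S2 k)"
  unfolding S2_def by (intro borel_measurable_sum) auto
lemma rv_R[measurable]: "k \<ge> x0 \<Longrightarrow> random_variable borel (R k)"
  unfolding R_def by (intro borel_measurable_suminf) auto

lemma indep_blocks:
  assumes AB: "A \<inter> B = {}" "A \<subseteq> {x0..}" "B \<subseteq> {x0..}"
    and f: "f \<in> borel_measurable (PiM A (\<lambda>_. borel))" and h: "h \<in> borel_measurable (PiM B (\<lambda>_. borel))"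
  shows "indep_var borel (\<lambda>\<omega>. f (restrict (\<lambda>i. \<tau> i \<omega>) A)) borel (\<lambda>\<omega>. h (restrict (\<lambda>i. \<tau> i \<omega>) B))"
  using indep_var_compose[OF indep_var_restrict[OF indep AB] f h] by (simp add: o_def)

lemma indep_S1_R: "k \<ge> x0 \<Longrightarrow> indep_var borel (S1 k) borel (R k)"
proof -
  assume k: "k \<ge> x0"
  have "indep_var borel (\<lambda>\<omega>. (\<lambda>x. \<Sum>l\<in>{Suc x0..k}. x l) (restrict (\<lambda>i. \<tau> i \<omega>) {Suc x0..k}))
     borel (\<lambda>\<omega>. (\<lambda>x. \<Sum>l. x (Suc k + l)) (restrict (\<lambda>i. \<tau> i \<omega>) {Suc k..}))"
    using k by (intro indep_blocks borel_measurable_sum borel_measurable_suminf measurable_component_singleton) auto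
  moreover have "(\<lambda>\<omega>. (\<lambda>x. \<Sum>l\<in>{Suc x0..k}. x l) (restrict (\<lambda>i. \<tau> i \<omega>) {Suc x0..k})) = S1 k"
    by (auto simp: S1_def fun_eq_iff)
  moreover have "(\<lambda>\<omega>. (\<lambda>x. \<Sum>l. x (Suc k + l)) (restrict (\<lambda>i. \<tau> i \<omega>) {Suc k..})) = R k"
    by (auto simp: R_def fun_eq_iff)
  ultimately show ?thesis by simp
qed

lemma indep_tau_S1R: "k \<ge> x0 \<Longrightarrow> indep_var borel (\<tau> x0) borel (\<lambda>\<omega>. S1 k \<omega> + R k \<omega>)"
proof -
  assume k: "k \<ge> x0"
  have "indep_var borel (\<lambda>\<omega>. (\<lambda>x. x x0) (restrict (\<lambda>i. \<tau> i \<omega>) {x0}))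
     borel (\<lambda>\<omega>. (\<lambda>x. (\<Sum>l\<in>{Suc x0..k}. x l) + (\<Sum>l. x (Suc k + l))) (restrict (\<lambda>i. \<tau> i \<omega>) {Suc x0..}))"
    using k by (intro indep_blocks borel_measurable_add borel_measurable_sum borel_measurable_suminf measurable_component_singleton) auto
  moreover have "(\<lambda>\<omega>. (\<lambda>x. x x0) (restrict (\<lambda>i. \<tau> i \<omega>) {x0})) = \<tau> x0"
    by auto
  moreover have "(\<lambda>\<omega>. (\<lambda>x. (\<Sum>l\<in>{Suc x0..k}. x l) + (\<Sum>l. x (Suc k + l))) (restrict (\<lambda>i. \<tau> i \<omega>) {Suc x0..})) = (\<lambda>\<omega>. S1 k \<omega> + R k \<omega>)"
    using k by (auto simp: R_def S1_def fun_eq_iff)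
  ultimately show ?thesis by simp
qed

lemma indep_tau_S1: "indep_var borel (\<tau> x0) borel (S1 k)"
proof -
  have "indep_vars (\<lambda>_. borel) \<tau> (insert x0 {Suc x0..k})"
    by (rule indep_vars_subset[OF indep]) auto
  from indep_vars_sum[OF _ _ this] show ?thesis unfolding S1_def[abs_def] by simp
qed

lemma indep_tau_S2: "indep_var borel (\<tau> (Suc x0)) borel (S2 k)"
proof -
  have "indep_vars (\<lambda>_. borel) \<tau> (insert (Suc x0) {Suc (Suc x0)..k})"
    by (rule indep_vars_subset[OF indep]) auto
  from indep_vars_sum[OF _ _ this] show ?thesis unfolding S2_def[abs_def] by simp
qed

lemma indep_prod:
  fixes u :: "nat \<Rightarrow> real \<Rightarrow> ennreal"
  assumes J: "finite J" "J \<subseteq> {x0..}" and u[measurable]: "\<And>l. u l \<in> borel_measurable borel"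
  shows "(\<integral>\<^sup>+\<omega>. (\<Prod>l\<in>J. u l (\<tau> l \<omega>)) \<partial>M) = (\<Prod>l\<in>J. \<integral>\<^sup>+\<omega>. u l (\<tau> l \<omega>) \<partial>M)"
proof -
  have "indep_vars (\<lambda>_. borel) (\<lambda>l \<omega>. u l (\<tau> l \<omega>)) J"
    by (rule indep_vars_compose2[OF indep_vars_subset[OF indep J(2)]]) auto
  from indep_vars_nn_integral[OF J(1) this] show ?thesis by simp
qed


lemma sum_split_x0: "x0 \<le> k \<Longrightarrow> (\<Sum>i<Suc k - x0. f (x0 + i)) = (f x0 + (\<Sum>l\<in>{Suc x0..k}. f l)::real)"
proof -
  assume k: "x0 \<le> k"
  have "(\<Sum>i<Suc k - x0. f (x0 + i)) = (\<Sum>l\<in>{x0..k}. f l)"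
    using k
    by (subst sum.atLeastAtMost_shift_0[of x0 k]) (auto simp: lessThan_atLeast0 atLeastLessThanSuc_atLeastAtMost add.commute Suc_diff_le)
  also have "\<dots> = f x0 + (\<Sum>l\<in>{Suc x0..k}. f l)" using k by (simp add: sum.atLeast_Suc_atMost)
  finally show ?thesis .
qed

definition Phi :: "nat \<Rightarrow> real \<Rightarrow> ennreal" where
  "Phi k t = (\<integral>\<^sup>+\<omega>. ennreal (exp (c * S1 k \<omega>)) * indicator {..t} (S1 k \<omega>) \<partial>M)"
definition PhiT :: "nat \<Rightarrow> real \<Rightarrow> ennreal" where
  "PhiT k t = (\<integral>\<^sup>+\<omega>. ennreal (exp (c * (S1 k \<omega> + R k \<omega>))) * indicator {..t} (S1 k \<omega> + R k \<omega>) \<partial>M)"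

lemma dens_conv:
  assumes [measurable]: "random_variable borel Y"
  shows "(\<integral>\<^sup>+\<omega>. ennreal (exponential_density c (t - Y \<omega>)) \<partial>M) =
    ennreal (c * exp (- c * t)) * (\<integral>\<^sup>+\<omega>. ennreal (exp (c * Y \<omega>)) * indicator {..t} (Y \<omega>) \<partial>M)"
proof -
  have "(\<integral>\<^sup>+\<omega>. ennreal (exponential_density c (t - Y \<omega>)) \<partial>M) =
     (\<integral>\<^sup>+\<omega>. ennreal (c * exp (- c * t)) * (ennreal (exp (c * Y \<omega>)) * indicator {..t} (Y \<omega>)) \<partial>M)"
  proof (rule nn_integral_cong)
    fix \<omega>
    show "ennreal (exponential_density c (t - Y \<omega>)) = ennreal (c * exp (- c * t)) * (ennreal (exp (c * Y \<omega>)) * indicator {..t} (Y \<omega>))"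
    proof (cases "Y \<omega> \<le> t")
      case True
      have "exponential_density c (t - Y \<omega>) = c * exp (- c * t) * exp (c * Y \<omega>)"
        using True by (simp add: exponential_density_def exp_add[symmetric] algebra_simps)
      then show ?thesis using True c_pos by (simp add: ennreal_mult[symmetric])
    next
      case False then show ?thesis by (simp add: exponential_density_def)
    qed
  qed
  also have "\<dots> = ennreal (c * exp (- c * t)) * (\<integral>\<^sup>+\<omega>. ennreal (exp (c * Y \<omega>)) * indicator {..t} (Y \<omega>) \<partial>M)"
    by (rule nn_integral_cmult) measurable
  finally show ?thesis .
qed

lemma expo_c: "distributed M lborel (\<tau> x0) (\<lambda>x. ennreal (exponential_density c x))"
  using expo by (simp add: c_def)

lemma gk_repr:
  assumes k: "k \<ge> x0" and D: "distributed M lborel (\<lambda>\<omega>. \<Sum>l=x0..k. \<tau> l \<omega>) h"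
  shows "AE t in lborel. h t = ennreal (c * exp (- c * t)) * Phi k t"
proof -
  have D2: "distributed M lborel (\<lambda>\<omega>. \<tau> x0 \<omega> + S1 k \<omega>) (\<lambda>t. \<integral>\<^sup>+\<omega>. ennreal (exponential_density c (t - S1 k \<omega>)) \<partial>M)"
    by (rule distributed_add_indep[OF indep_tau_S1 expo_c])
  have "(\<lambda>\<omega>. \<Sum>l=x0..k. \<tau> l \<omega>) = (\<lambda>\<omega>. \<tau> x0 \<omega> + S1 k \<omega>)"
    using k by (auto simp: S1_def sum.atLeast_Suc_atMost)
  with D have D1: "distributed M lborel (\<lambda>\<omega>. \<tau> x0 \<omega> + S1 k \<omega>) h" by simp
  have "AE t in lborel. h t = (\<integral>\<^sup>+\<omega>. ennreal (exponential_density c (t - S1 k \<omega>)) \<partial>M)"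
    by (rule distributed_unique[OF D1 D2])
  then show ?thesis by (simp add: dens_conv Phi_def)
qed

lemma T_split_AE:
  assumes k: "k \<ge> x0"
  shows "AE \<omega> in M. (\<Sum>l. \<tau> (x0 + l) \<omega>) = \<tau> x0 \<omega> + (S1 k \<omega> + R k \<omega>)"
  using tail_summable_AE(1)[OF order_refl]
proof eventually_elim
  case (elim \<omega>)
  let ?n = "Suc k - x0"
  have "(\<Sum>l. \<tau> (x0 + l) \<omega>) = (\<Sum>l. \<tau> (x0 + (l + ?n)) \<omega>) + (\<Sum>i<?n. \<tau> (x0 + i) \<omega>)"
    using suminf_split_initial_segment[OF elim, of ?n] by simp
  also have "(\<lambda>l. \<tau> (x0 + (l + ?n)) \<omega>) = (\<lambda>l. \<tau> (Suc k + l) \<omega>)"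
    using k by (intro ext) (simp add: algebra_simps)
  also have "(\<Sum>i<?n. \<tau> (x0 + i) \<omega>) = \<tau> x0 \<omega> + S1 k \<omega>"
    unfolding S1_def by (rule sum_split_x0[OF k])
  finally show ?case by (simp add: R_def)
qed

lemma g_repr:
  assumes k: "k \<ge> x0" and D: "distributed M lborel (\<lambda>\<omega>. \<Sum>l. \<tau> (x0 + l) \<omega>) h"
  shows "AE t in lborel. h t = ennreal (c * exp (- c * t)) * PhiT k t"
proof -
  have D2: "distributed M lborel (\<lambda>\<omega>. \<tau> x0 \<omega> + (S1 k \<omega> + R k \<omega>)) (\<lambda>t. \<integral>\<^sup>+\<omega>. ennreal (exponential_density c (t - (S1 k \<omega> + R k \<omega>))) \<partial>M)"
    by (rule distributed_add_indep[OF indep_tau_S1R[OF k] expo_c])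
  have "distr M lborel (\<lambda>\<omega>. \<Sum>l. \<tau> (x0 + l) \<omega>) = distr M lborel (\<lambda>\<omega>. \<tau> x0 \<omega> + (S1 k \<omega> + R k \<omega>))"
    using k by (intro distr_cong_AE T_split_AE) (auto simp: measurable_lborel1)
  with D have D1: "distributed M lborel (\<lambda>\<omega>. \<tau> x0 \<omega> + (S1 k \<omega> + R k \<omega>)) h"
    using k by (auto simp: distributed_def measurable_lborel1)
  have "AE t in lborel. h t = (\<integral>\<^sup>+\<omega>. ennreal (exponential_density c (t - (S1 k \<omega> + R k \<omega>))) \<partial>M)"
    by (rule distributed_unique[OF D1 D2])
  moreover have "random_variable borel (\<lambda>\<omega>. S1 k \<omega> + R k \<omega>)" using k by measurable
  ultimately show ?thesis by (simp add: dens_conv PhiT_def)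
qed


lemma summable_invFc: "j > x0 \<Longrightarrow> summable (\<lambda>l. 1 / (F (j + l) - c))"
proof -
  assume j: "j > x0"
  have s: "summable (\<lambda>l. 1 / F (j + l))" using summable_invF j x0 by auto
  then have "(\<lambda>l. 1 / F (j + l)) \<longlonglongrightarrow> 0" by (rule summable_LIMSEQ_zero)
  then have ev: "eventually (\<lambda>l. 1 / F (j + l) < 1 / (2 * c)) sequentially"
    using c_pos by (intro order_tendstoD) auto
  have "summable (\<lambda>l. 2 * (1 / F (j + l)))" using s by (rule summable_mult)
  moreover have "eventually (\<lambda>l. norm (1 / (F (j + l) - c)) \<le> 2 * (1 / F (j + l))) sequentially"
    using ev
  proof eventually_elim
    case (elim l)
    have Fp: "F (j + l) > 0" using F_pos j by auto
    have Fc: "F (j + l) > c" using F_gt_c j by auto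
    from elim Fp c_pos have "2 * c < F (j + l)" by (simp add: field_simps)
    then show ?case using Fp Fc by (simp add: field_simps)
  qed
  ultimately show ?thesis by (rule summable_comparison_test_ev[rotated])
qed

definition tailD :: "nat \<Rightarrow> real" where "tailD j = (\<Sum>l. 1 / (F (j + l) - c))"

lemma sum_le_tailD:
  assumes j: "j > x0" and J: "finite J" "J \<subseteq> {j..}"
  shows "(\<Sum>l\<in>J. 1 / (F l - c)) \<le> tailD j"
proof -
  obtain m where m: "J \<subseteq> {j..<j + m}"
  proof -
    obtain b where "J \<subseteq> {..<b}" using finite_nat_bounded[OF J(1)] by blast
    then show ?thesis using J(2) by (intro that[of "b - j"]) force
  qed
  have nn: "\<And>l. l \<ge> j \<Longrightarrow> 0 \<le> 1 / (F l - c)" using F_gt_c j by (simp add: less_imp_le)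
  have "(\<Sum>l\<in>J. 1 / (F l - c)) \<le> (\<Sum>l\<in>{j..<j + m}. 1 / (F l - c))"
    using m J nn by (intro sum_mono2) auto
  also have "\<dots> = (\<Sum>l<m. 1 / (F (j + l) - c))"
    by (subst sum.atLeastLessThan_shift_0) (simp add: lessThan_atLeast0 add.commute)
  also have "\<dots> \<le> tailD j" unfolding tailD_def
    using summable_invFc[OF j] nn by (intro sum_le_suminf) auto
  finally show ?thesis .
qed

lemma tailD_nonneg: "j > x0 \<Longrightarrow> 0 \<le> tailD j"
  using sum_le_tailD[of j "{}"] by simp

lemma E_exp_sum:
  assumes J: "finite J" "J \<subseteq> {Suc x0..}"
  shows "(\<integral>\<^sup>+\<omega>. ennreal (exp (c * (\<Sum>l\<in>J. \<tau> l \<omega>))) \<partial>M) \<le> ennreal (exp (c * (\<Sum>l\<in>J. 1 / (F l - c))))"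
proof -
  have "(\<integral>\<^sup>+\<omega>. ennreal (exp (c * (\<Sum>l\<in>J. \<tau> l \<omega>))) \<partial>M) = (\<integral>\<^sup>+\<omega>. (\<Prod>l\<in>J. ennreal (exp (c * \<tau> l \<omega>))) \<partial>M)"
    using J(1) by (intro nn_integral_cong) (simp add: sum_distrib_left exp_sum prod_ennreal)
  also have "\<dots> = (\<Prod>l\<in>J. \<integral>\<^sup>+\<omega>. ennreal (exp (c * \<tau> l \<omega>)) \<partial>M)"
    using J by (intro indep_prod[where u="\<lambda>l x. ennreal (exp (c * x))"]) auto
  also have "\<dots> = (\<Prod>l\<in>J. ennreal (F l / (F l - c)))"
    using J by (intro prod.cong E_exp_tau) auto
  also have "\<dots> = ennreal (\<Prod>l\<in>J. F l / (F l - c))"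
    using J F_gt_c F_pos by (intro prod_ennreal) (auto simp: less_imp_le)
  also have "\<dots> \<le> ennreal (\<Prod>l\<in>J. exp (c * (1 / (F l - c))))"
  proof (intro ennreal_leI prod_mono conjI)
    fix l assume l: "l \<in> J"
    have Fc: "F l - c > 0" using F_gt_c l J by auto
    have "F l / (F l - c) = 1 + c * (1 / (F l - c))" using Fc by (simp add: field_simps)
    also have "\<dots> \<le> exp (c * (1 / (F l - c)))" by (rule exp_ge_add_one_self)
    finally show "F l / (F l - c) \<le> exp (c * (1 / (F l - c)))" .
    show "0 \<le> F l / (F l - c)" using Fc F_pos[of l] l J by auto
  qed
  also have "\<dots> = ennreal (exp (c * (\<Sum>l\<in>J. 1 / (F l - c))))"
    using J(1) by (simp add: sum_distrib_left exp_sum)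
  finally show ?thesis .
qed

definition "Kc = exp (c * tailD (Suc x0))"

lemma E_exp_S1: "(\<integral>\<^sup>+\<omega>. ennreal (exp (c * S1 k \<omega>)) \<partial>M) \<le> ennreal Kc"
proof -
  have "(\<integral>\<^sup>+\<omega>. ennreal (exp (c * S1 k \<omega>)) \<partial>M) \<le> ennreal (exp (c * (\<Sum>l\<in>{Suc x0..k}. 1 / (F l - c))))"
    unfolding S1_def by (rule E_exp_sum) auto
  also have "\<dots> \<le> ennreal Kc" unfolding Kc_def
    using sum_le_tailD[of "Suc x0" "{Suc x0..k}"] c_pos by (intro ennreal_leI) auto
  finally show ?thesis .
qed

lemma E_exp_S2: "(\<integral>\<^sup>+\<omega>. ennreal (exp (c * S2 k \<omega>)) \<partial>M) \<le> ennreal Kc"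
proof -
  have "(\<integral>\<^sup>+\<omega>. ennreal (exp (c * S2 k \<omega>)) \<partial>M) \<le> ennreal (exp (c * (\<Sum>l\<in>{Suc (Suc x0)..k}. 1 / (F l - c))))"
    unfolding S2_def by (rule E_exp_sum) auto
  also have "\<dots> \<le> ennreal Kc" unfolding Kc_def
    using sum_le_tailD[of "Suc x0" "{Suc (Suc x0)..k}"] c_pos by (intro ennreal_leI) auto
  finally show ?thesis .
qed

lemma Phi_le_Kc: "Phi k t \<le> ennreal Kc"
proof -
  have "Phi k t \<le> (\<integral>\<^sup>+\<omega>. ennreal (exp (c * S1 k \<omega>)) \<partial>M)"
    unfolding Phi_def by (intro nn_integral_mono) (auto split: split_indicator)
  also have "\<dots> \<le> ennreal Kc" by (rule E_exp_S1)
  finally show ?thesis .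
qed

lemma Phi_mono: "s \<le> t \<Longrightarrow> Phi k s \<le> Phi k t"
  unfolding Phi_def by (intro nn_integral_mono) (auto split: split_indicator)


lemma expdens_bound: "exponential_density (F (Suc x0)) x * exp (c * (x + y)) \<le> F (Suc x0) * exp (c * y)"
proof (cases "x < 0")
  case True then show ?thesis using F_pos[of "Suc x0"] by (simp add: exponential_density_def)
next
  case False
  have c2: "F (Suc x0) > c" using F_gt_c by simp
  have "exponential_density (F (Suc x0)) x * exp (c * (x + y)) = F (Suc x0) * exp (c * y) * exp (- ((F (Suc x0) - c) * x))"
    using False by (simp add: exponential_density_def exp_add[symmetric] algebra_simps)
  also have "\<dots> \<le> F (Suc x0) * exp (c * y) * 1"
    using False c2 F_pos[of "Suc x0"] by (intro mult_left_mono) auto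
  finally show ?thesis by simp
qed

lemma Phi_lip:
  assumes k: "k \<ge> Suc x0" and st: "s \<le> t"
  shows "Phi k t \<le> Phi k s + ennreal (F (Suc x0) * (t - s) * Kc)"
proof -
  let ?c2 = "F (Suc x0)"
  have c2pos: "?c2 > 0" using F_pos by simp
  have Kpos: "Kc > 0" by (simp add: Kc_def)
  have split: "Phi k t = Phi k s + (\<integral>\<^sup>+\<omega>. ennreal (exp (c * S1 k \<omega>)) * indicator {s<..t} (S1 k \<omega>) \<partial>M)"
  proof -
    have "Phi k t = (\<integral>\<^sup>+\<omega>. ennreal (exp (c * S1 k \<omega>)) * indicator {..s} (S1 k \<omega>) + ennreal (exp (c * S1 k \<omega>)) * indicator {s<..t} (S1 k \<omega>) \<partial>M)"
      unfolding Phi_def using st by (intro nn_integral_cong) (auto split: split_indicator)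
    also have "\<dots> = Phi k s + (\<integral>\<^sup>+\<omega>. ennreal (exp (c * S1 k \<omega>)) * indicator {s<..t} (S1 k \<omega>) \<partial>M)"
      unfolding Phi_def by (rule nn_integral_add) auto
    finally show ?thesis .
  qed
  have S1eq: "\<And>\<omega>. S1 k \<omega> = \<tau> (Suc x0) \<omega> + S2 k \<omega>"
    using k by (simp add: S1_def S2_def sum.atLeast_Suc_atMost)
  have D: "distributed M lborel (\<tau> (Suc x0)) (\<lambda>x. ennreal (exponential_density ?c2 x))"
    using expo by simp
  define h where "h z = ennreal (exp (c * (fst z + snd z))) * indicator {s<..t} (fst z + snd z)" for z :: "real \<times> real"
  have h[measurable]: "h \<in> borel_measurable (borel \<Otimes>\<^sub>M borel)" unfolding h_def by measurable
  have "(\<integral>\<^sup>+\<omega>. ennreal (exp (c * S1 k \<omega>)) * indicator {s<..t} (S1 k \<omega>) \<partial>M) = (\<integral>\<^sup>+\<omega>. h (\<tau> (Suc x0) \<omega>, S2 k \<omega>) \<partial>M)"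
    by (simp add: h_def S1eq)
  also have "\<dots> = (\<integral>\<^sup>+\<omega>. \<integral>\<^sup>+\<omega>'. h (\<tau> (Suc x0) \<omega>', S2 k \<omega>) \<partial>M \<partial>M)"
    by (rule indep_nn_pair[OF indep_tau_S2 h])
  also have "\<dots> = (\<integral>\<^sup>+\<omega>. \<integral>\<^sup>+x. ennreal (exponential_density ?c2 x) * h (x, S2 k \<omega>) \<partial>lborel \<partial>M)"
    by (intro nn_integral_cong distributed_nn_integral[OF D, symmetric]) (simp add: h_def)
  also have "\<dots> \<le> (\<integral>\<^sup>+\<omega>. \<integral>\<^sup>+x. ennreal (?c2 * exp (c * S2 k \<omega>)) * indicator {s - S2 k \<omega><..t - S2 k \<omega>} x \<partial>lborel \<partial>M)"
  proof (intro nn_integral_mono)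
    fix \<omega> x
    have "ennreal (exponential_density ?c2 x) * h (x, S2 k \<omega>) = ennreal (exponential_density ?c2 x * exp (c * (x + S2 k \<omega>))) * indicator {s - S2 k \<omega><..t - S2 k \<omega>} x"
      using c2pos by (auto simp: h_def ennreal_mult[symmetric] exponential_density_def split: split_indicator)
    also have "\<dots> \<le> ennreal (?c2 * exp (c * S2 k \<omega>)) * indicator {s - S2 k \<omega><..t - S2 k \<omega>} x"
      by (intro mult_right_mono ennreal_leI expdens_bound) auto
    finally show "ennreal (exponential_density ?c2 x) * h (x, S2 k \<omega>) \<le> ennreal (?c2 * exp (c * S2 k \<omega>)) * indicator {s - S2 k \<omega><..t - S2 k \<omega>} x" .
  qed
  also have "\<dots> = (\<integral>\<^sup>+\<omega>. ennreal (?c2 * (t - s)) * ennreal (exp (c * S2 k \<omega>)) \<partial>M)"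
  proof (rule nn_integral_cong)
    fix \<omega>
    have "(\<integral>\<^sup>+x. ennreal (?c2 * exp (c * S2 k \<omega>)) * indicator {s - S2 k \<omega><..t - S2 k \<omega>} x \<partial>lborel)
        = ennreal (?c2 * exp (c * S2 k \<omega>)) * ennreal (t - s)"
      using st by (subst nn_integral_cmult_indicator) (auto simp: emeasure_lborel_Ioc)
    also have "\<dots> = ennreal (?c2 * (t - s)) * ennreal (exp (c * S2 k \<omega>))"
      using st c2pos by (simp add: ennreal_mult[symmetric] algebra_simps)
    finally show "(\<integral>\<^sup>+x. ennreal (?c2 * exp (c * S2 k \<omega>)) * indicator {s - S2 k \<omega><..t - S2 k \<omega>} x \<partial>lborel)
        = ennreal (?c2 * (t - s)) * ennreal (exp (c * S2 k \<omega>))" .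
  qed
  also have "\<dots> = ennreal (?c2 * (t - s)) * (\<integral>\<^sup>+\<omega>. ennreal (exp (c * S2 k \<omega>)) \<partial>M)"
    by (rule nn_integral_cmult) measurable
  also have "\<dots> \<le> ennreal (?c2 * (t - s)) * ennreal Kc"
    by (intro mult_left_mono E_exp_S2) auto
  also have "\<dots> = ennreal (?c2 * (t - s) * Kc)"
    using st c2pos Kpos by (simp add: ennreal_mult[symmetric])
  finally show ?thesis using split by (simp add: add_left_mono)
qed


lemma R_nonneg_AE: "k \<ge> x0 \<Longrightarrow> AE \<omega> in M. 0 \<le> R k \<omega>"
proof -
  assume k: "k \<ge> x0"
  have AEs: "AE \<omega> in M. summable (\<lambda>l. \<tau> (Suc k + l) \<omega>)" using tail_summable_AE(1)[of "Suc k"] k by simp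
  show ?thesis using AEs tau_nonneg_AE_all
  proof eventually_elim
    case (elim \<omega>)
    then show ?case unfolding R_def using k by (intro suminf_nonneg) auto
  qed
qed

lemma E_exp_R:
  assumes k: "k \<ge> x0"
  shows "(\<integral>\<^sup>+\<omega>. ennreal (exp (c * R k \<omega>)) \<partial>M) \<le> ennreal (exp (c * tailD (Suc k)))"
proof -
  define P where "P m \<omega> = (\<Sum>l\<in>{Suc k..<Suc k + m}. \<tau> l \<omega>)" for m \<omega>
  have P_eq: "P m \<omega> = (\<Sum>l<m. \<tau> (Suc k + l) \<omega>)" for m \<omega>
    unfolding P_def by (subst sum.atLeastLessThan_shift_0) (simp add: lessThan_atLeast0 add.commute)
  have Pm0[measurable]: "random_variable borel (P m)" for m
    unfolding P_def using k by (intro borel_measurable_sum rv_tau) auto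
  have Pm[measurable]: "(\<lambda>\<omega>. ennreal (exp (c * P m \<omega>))) \<in> borel_measurable M" for m
    by measurable
  have AEs: "AE \<omega> in M. summable (\<lambda>l. \<tau> (Suc k + l) \<omega>)" using tail_summable_AE(1)[of "Suc k"] k by simp
  have AEl: "AE \<omega> in M. ennreal (exp (c * R k \<omega>)) = liminf (\<lambda>m. ennreal (exp (c * P m \<omega>)))"
    using AEs
  proof eventually_elim
    case (elim \<omega>)
    have "(\<lambda>m. P m \<omega>) \<longlonglongrightarrow> R k \<omega>"
      unfolding P_eq R_def by (rule summable_LIMSEQ[OF elim])
    then have L: "(\<lambda>m. ennreal (exp (c * P m \<omega>))) \<longlonglongrightarrow> ennreal (exp (c * R k \<omega>))"
      by (intro tendsto_ennrealI tendsto_intros)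
    show ?case by (rule lim_imp_Liminf[symmetric, OF _ L]) simp
  qed
  have "(\<integral>\<^sup>+\<omega>. ennreal (exp (c * R k \<omega>)) \<partial>M) = (\<integral>\<^sup>+\<omega>. liminf (\<lambda>m. ennreal (exp (c * P m \<omega>))) \<partial>M)"
    using AEl by (intro nn_integral_cong_AE) auto
  also have "\<dots> \<le> liminf (\<lambda>m. \<integral>\<^sup>+\<omega>. ennreal (exp (c * P m \<omega>)) \<partial>M)"
    by (intro nn_integral_liminf) auto
  also have "\<dots> \<le> limsup (\<lambda>m. \<integral>\<^sup>+\<omega>. ennreal (exp (c * P m \<omega>)) \<partial>M)"
    by (rule Liminf_le_Limsup) simp
  also have "\<dots> \<le> ennreal (exp (c * tailD (Suc k)))"
  proof (intro Limsup_bounded always_eventually allI)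
    fix m
    have "(\<integral>\<^sup>+\<omega>. ennreal (exp (c * P m \<omega>)) \<partial>M) \<le> ennreal (exp (c * (\<Sum>l\<in>{Suc k..<Suc k + m}. 1 / (F l - c))))"
      unfolding P_def using k by (intro E_exp_sum) auto
    also have "\<dots> \<le> ennreal (exp (c * tailD (Suc k)))"
    proof -
      have "(\<Sum>l\<in>{Suc k..<Suc k + m}. 1 / (F l - c)) \<le> tailD (Suc k)"
        using k by (intro sum_le_tailD) auto
      then show ?thesis using c_pos by (intro ennreal_leI) (auto intro: mult_left_mono)
    qed
    finally show "(\<integral>\<^sup>+\<omega>. ennreal (exp (c * P m \<omega>)) \<partial>M) \<le> ennreal (exp (c * tailD (Suc k)))" .
  qed
  finally show ?thesis .
qed

lemma PhiT_upper:
  assumes k: "k \<ge> x0"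
  shows "PhiT k t \<le> Phi k t * ennreal (exp (c * tailD (Suc k)))"
proof -
  have [measurable]: "random_variable borel (R k)" using k by measurable
  have "PhiT k t \<le> (\<integral>\<^sup>+\<omega>. (ennreal (exp (c * S1 k \<omega>)) * indicator {..t} (S1 k \<omega>)) * ennreal (exp (c * R k \<omega>)) \<partial>M)"
    unfolding PhiT_def using R_nonneg_AE[OF k]
  proof (intro nn_integral_mono_AE, eventually_elim)
    case (elim \<omega>)
    show ?case
    proof (cases "S1 k \<omega> + R k \<omega> \<le> t")
      case True
      then have "S1 k \<omega> \<le> t" using elim by simp
      then show ?thesis using True
        by (simp add: ennreal_mult[symmetric] exp_add[symmetric] algebra_simps)
    qed simp
  qed
  also have "\<dots> = Phi k t * (\<integral>\<^sup>+\<omega>. ennreal (exp (c * R k \<omega>)) \<partial>M)"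
    unfolding Phi_def
    by (rule indep_nn_prod[OF indep_S1_R[OF k], where u="\<lambda>y. ennreal (exp (c * y)) * indicator {..t} y" and v="\<lambda>y. ennreal (exp (c * y))"]) auto
  also have "\<dots> \<le> Phi k t * ennreal (exp (c * tailD (Suc k)))"
    by (intro mult_left_mono E_exp_R[OF k]) auto
  finally show ?thesis .
qed

lemma PhiT_lower:
  assumes k: "k \<ge> x0" and d: "0 \<le> \<delta>"
  shows "Phi k (t - \<delta>) * ennreal (prob {\<omega> \<in> space M. R k \<omega> \<le> \<delta>}) \<le> PhiT k t"
proof -
  have [measurable]: "random_variable borel (R k)" using k by measurable
  have Rs: "{\<omega> \<in> space M. R k \<omega> \<le> \<delta>} \<in> sets M" by measurable
  have "(\<integral>\<^sup>+\<omega>. indicator {..\<delta>} (R k \<omega>) \<partial>M) = (\<integral>\<^sup>+\<omega>. indicator {\<omega> \<in> space M. R k \<omega> \<le> \<delta>} \<omega> \<partial>M)"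
    by (intro nn_integral_cong) (auto split: split_indicator)
  also have "\<dots> = emeasure M {\<omega> \<in> space M. R k \<omega> \<le> \<delta>}"
    using Rs by (rule nn_integral_indicator)
  also have "\<dots> = ennreal (prob {\<omega> \<in> space M. R k \<omega> \<le> \<delta>})"
    by (simp add: emeasure_eq_measure)
  finally have I: "(\<integral>\<^sup>+\<omega>. indicator {..\<delta>} (R k \<omega>) \<partial>M) = ennreal (prob {\<omega> \<in> space M. R k \<omega> \<le> \<delta>})" .
  have "Phi k (t - \<delta>) * ennreal (prob {\<omega> \<in> space M. R k \<omega> \<le> \<delta>}) =
     (\<integral>\<^sup>+\<omega>. (ennreal (exp (c * S1 k \<omega>)) * indicator {..t - \<delta>} (S1 k \<omega>)) * indicator {..\<delta>} (R k \<omega>) \<partial>M)"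
    unfolding Phi_def I[symmetric]
    by (rule indep_nn_prod[OF indep_S1_R[OF k], where u="\<lambda>y. ennreal (exp (c * y)) * indicator {..t - \<delta>} y" and v="\<lambda>y. indicator {..\<delta>} y", symmetric]) auto
  also have "\<dots> \<le> PhiT k t"
    unfolding PhiT_def using R_nonneg_AE[OF k]
  proof (intro nn_integral_mono_AE, eventually_elim)
    case (elim \<omega>)
    show ?case
    proof (cases "S1 k \<omega> \<le> t - \<delta> \<and> R k \<omega> \<le> \<delta>")
      case True
      then have "S1 k \<omega> + R k \<omega> \<le> t" by simp
      moreover have "exp (c * S1 k \<omega>) \<le> exp (c * (S1 k \<omega> + R k \<omega>))"
        using elim c_pos by (simp add: mult_left_mono)
      ultimately show ?thesis using True
        by (simp add: ennreal_leI)
    next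
      case False then show ?thesis by (auto split: split_indicator)
    qed
  qed
  finally show ?thesis .
qed

definition tailF :: "nat \<Rightarrow> real" where "tailF j = (\<Sum>l. 1 / F (j + l))"

lemma R_Markov:
  assumes k: "k \<ge> x0" and d: "0 < \<delta>"
  shows "prob {\<omega> \<in> space M. \<delta> < R k \<omega>} \<le> tailF (Suc k) / \<delta>"
proof -
  have [measurable]: "random_variable borel (R k)" using k by measurable
  have tnn: "0 \<le> tailF (Suc k)" unfolding tailF_def
    using summable_invF[of "Suc k"] F_pos k by (intro suminf_nonneg) (auto simp: less_imp_le)
  have "emeasure M {\<omega> \<in> space M. \<delta> < R k \<omega>} \<le> emeasure M {\<omega> \<in> space M. 1 \<le> ennreal (1 / \<delta>) * ennreal (R k \<omega>)}"
  proof (intro emeasure_mono subsetI)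
    fix \<omega> assume "\<omega> \<in> {\<omega> \<in> space M. \<delta> < R k \<omega>}"
    then have "\<omega> \<in> space M" "\<delta> < R k \<omega>" by auto
    then have "1 \<le> (1 / \<delta>) * R k \<omega>" using d by (simp add: field_simps)
    then have "ennreal 1 \<le> ennreal ((1 / \<delta>) * R k \<omega>)" by (rule ennreal_leI)
    then show "\<omega> \<in> {\<omega> \<in> space M. 1 \<le> ennreal (1 / \<delta>) * ennreal (R k \<omega>)}"
      using \<open>\<omega> \<in> space M\<close> d by (simp add: ennreal_mult[symmetric])
  qed measurable
  also have "\<dots> \<le> ennreal (1 / \<delta>) * (\<integral>\<^sup>+\<omega>. ennreal (R k \<omega>) * indicator (space M) \<omega> \<partial>M)"
    using nn_integral_Markov_inequality[of "\<lambda>\<omega>. ennreal (R k \<omega>)" "space M" M "ennreal (1 / \<delta>)"]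
    by simp
  also have "(\<integral>\<^sup>+\<omega>. ennreal (R k \<omega>) * indicator (space M) \<omega> \<partial>M) = (\<integral>\<^sup>+\<omega>. ennreal (\<Sum>l. \<tau> (Suc k + l) \<omega>) \<partial>M)"
    by (intro nn_integral_cong) (simp add: R_def)
  also have "\<dots> = ennreal (tailF (Suc k))"
    unfolding tailF_def using k by (intro tail_summable_AE(2)) auto
  also have "ennreal (1 / \<delta>) * ennreal (tailF (Suc k)) = ennreal (tailF (Suc k) / \<delta>)"
    using d tnn by (simp add: ennreal_mult[symmetric])
  finally show ?thesis using d tnn by (simp add: emeasure_eq_measure)
qed


lemma sum_shift_Suc: "(\<Sum>l\<in>{Suc m..k}. f l) = (\<Sum>i<k-m. (f::nat\<Rightarrow>real) (Suc m + i))"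
proof -
  have "(\<Sum>l\<in>{Suc m..k}. f l) = (\<Sum>l\<in>{Suc m..<Suc k}. f l)" by (simp add: atLeastLessThanSuc_atLeastAtMost)
  also have "\<dots> = (\<Sum>i<k-m. f (Suc m + i))" by (subst sum.atLeastLessThan_shift_0) (simp add: lessThan_atLeast0 o_def)
  finally show ?thesis .
qed

lemma tailF_small: "r > 0 \<Longrightarrow> \<exists>N. \<forall>n\<ge>N. tailF (Suc n) < r"
proof -
  assume r: "r > 0"
  have s: "summable (\<lambda>l. 1 / F (1 + l))" using summable_invF[of 1] by simp
  obtain N where N: "\<forall>n\<ge>N. norm (\<Sum>i. 1 / F (1 + (i + n))) < r"
    using suminf_exist_split[OF r s] by blast
  have "tailF (Suc n) = (\<Sum>i. 1 / F (1 + (i + n)))" for n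
    unfolding tailF_def by (simp add: algebra_simps)
  then show ?thesis using N by (intro exI[of _ N]) auto
qed

lemma tailD_small: "r > 0 \<Longrightarrow> \<exists>N. \<forall>n\<ge>N. tailD (Suc n) < r"
proof -
  assume r: "r > 0"
  have s: "summable (\<lambda>l. 1 / (F (Suc x0 + l) - c))" using summable_invFc[of "Suc x0"] by simp
  obtain N where N: "\<forall>n\<ge>N. norm (\<Sum>i. 1 / (F (Suc x0 + (i + n)) - c)) < r"
    using suminf_exist_split[OF r s] by blast
  have TD: "tailD (Suc (x0 + n)) = (\<Sum>i. 1 / (F (Suc x0 + (i + n)) - c))" for n
    unfolding tailD_def by (simp add: algebra_simps)
  have "\<forall>n\<ge>x0 + N. tailD (Suc n) < r"
  proof (intro allI impI)
    fix n assume n: "n \<ge> x0 + N"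
    have eq: "(\<lambda>i. 1 / (F (Suc x0 + (i + (n - x0))) - c)) = (\<lambda>i. 1 / (F (Suc n + i) - c))"
      using n by (intro ext) (simp add: add.commute)
    have "tailD (Suc n) = (\<Sum>i. 1 / (F (Suc x0 + (i + (n - x0))) - c))" unfolding eq tailD_def ..
    also have "\<dots> \<le> norm (\<Sum>i. 1 / (F (Suc x0 + (i + (n - x0))) - c))" by simp
    also have "\<dots> < r" using N[rule_format, of "n - x0"] n by simp
    finally show "tailD (Suc n) < r" .
  qed
  then show ?thesis by blast
qed

lemma prob_R_le:
  assumes k: "k \<ge> x0" and d: "0 < \<delta>"
  shows "prob {\<omega> \<in> space M. R k \<omega> \<le> \<delta>} \<ge> 1 - tailF (Suc k) / \<delta>"
proof -
  have [measurable]: "random_variable borel (R k)" using k by measurable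
  have "{\<omega> \<in> space M. R k \<omega> \<le> \<delta>} = space M - {\<omega> \<in> space M. \<delta> < R k \<omega>}" by auto
  then have "prob {\<omega> \<in> space M. R k \<omega> \<le> \<delta>} = 1 - prob {\<omega> \<in> space M. \<delta> < R k \<omega>}"
    by (simp add: prob_compl)
  then show ?thesis using R_Markov[OF k d] by simp
qed

lemma S1_nonneg_AE: "AE \<omega> in M. 0 \<le> S1 k \<omega>"
  using tau_nonneg_AE_all by eventually_elim (auto simp: S1_def intro!: sum_nonneg)

lemma pos_S1_small:
  assumes b: "b > 0"
  shows "(\<integral>\<^sup>+\<omega>. indicator {..b} (S1 m \<omega>) \<partial>M) > 0"
proof -
  let ?J = "{Suc x0..m}"
  define e where "e = b / (real (card ?J) + 1)"
  have e: "e > 0" using b by (simp add: e_def)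
  have ce: "real (card ?J) * e \<le> b"
    using b by (simp add: e_def field_simps)
  have "(\<integral>\<^sup>+\<omega>. (\<Prod>l\<in>?J. indicator {..e} (\<tau> l \<omega>)) \<partial>M) \<le> (\<integral>\<^sup>+\<omega>. indicator {..b} (S1 m \<omega>) \<partial>M)"
  proof (intro nn_integral_mono)
    fix \<omega>
    show "(\<Prod>l\<in>?J. indicator {..e} (\<tau> l \<omega>) :: ennreal) \<le> indicator {..b} (S1 m \<omega>)"
    proof (cases "\<forall>l\<in>?J. \<tau> l \<omega> \<le> e")
      case True
      then have "S1 m \<omega> \<le> real (card ?J) * e" unfolding S1_def by (intro sum_bounded_above) auto
      then have "S1 m \<omega> \<le> b" using ce by simp
      then show ?thesis using True by (simp add: indicator_def)
    next
      case False
      then obtain l where "l \<in> ?J" "\<not> \<tau> l \<omega> \<le> e" by auto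
      then have "indicator {..e} (\<tau> l \<omega>) = (0::ennreal)" by simp
      then have Z: "(\<Prod>l\<in>?J. indicator {..e} (\<tau> l \<omega>) :: ennreal) = 0"
        using \<open>l \<in> ?J\<close> by (intro prod_zero) auto
      show ?thesis unfolding Z by simp
    qed
  qed
  moreover have "(\<integral>\<^sup>+\<omega>. (\<Prod>l\<in>?J. indicator {..e} (\<tau> l \<omega>)) \<partial>M) = (\<Prod>l\<in>?J. \<integral>\<^sup>+\<omega>. indicator {..e} (\<tau> l \<omega>) \<partial>M)"
    by (intro indep_prod[where u="\<lambda>l. indicator {..e}"]) auto
  moreover have "(\<Prod>l\<in>?J. \<integral>\<^sup>+\<omega>. indicator {..e} (\<tau> l \<omega>) \<partial>M :: ennreal) > 0"
  proof -
    have "(\<integral>\<^sup>+\<omega>. indicator {..e} (\<tau> l \<omega>) \<partial>M) \<noteq> 0" if l: "l \<in> ?J" for l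
    proof -
      have D: "distributed M lborel (\<tau> l) (\<lambda>x. ennreal (exponential_density (F l) x))" using expo l by auto
      have Fl: "F l > 0" using F_pos l by auto
      have [measurable]: "random_variable borel (\<tau> l)" using l by auto
      have S: "{\<omega> \<in> space M. \<tau> l \<omega> \<le> e} \<in> sets M" by measurable
      have "(\<integral>\<^sup>+\<omega>. indicator {..e} (\<tau> l \<omega>) \<partial>M) = (\<integral>\<^sup>+\<omega>. indicator {\<omega> \<in> space M. \<tau> l \<omega> \<le> e} \<omega> \<partial>M)"
        by (intro nn_integral_cong) (auto split: split_indicator)
      also have "\<dots> = emeasure M {\<omega> \<in> space M. \<tau> l \<omega> \<le> e}"
        using S by (rule nn_integral_indicator)
      also have "\<dots> = ennreal (1 - exp (- e * F l))"
        using exponential_distributedD_le[OF D _ Fl, of e] e by (simp add: emeasure_eq_measure)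
      finally show ?thesis using e Fl by simp
    qed
    then show ?thesis by (simp add: zero_less_iff_neq_zero)
  qed
  ultimately show ?thesis by (metis order.strict_trans2)
qed

lemma Phi_pos:
  assumes a: "a > 0"
  shows "\<exists>p>0. \<exists>m0. \<forall>k\<ge>m0. ennreal p \<le> Phi k a"
proof -
  obtain N where N: "\<forall>n\<ge>N. tailF (Suc n) < a / 4"
    using tailF_small[of "a / 4"] a by auto
  define m where "m = max N x0"
  have m: "m \<ge> x0" "m \<ge> N" by (auto simp: m_def)
  have [measurable]: "random_variable borel (R m)" using m by measurable
  define P1 where "P1 = (\<integral>\<^sup>+\<omega>. indicator {..a/2} (S1 m \<omega>) \<partial>M)"
  define P2 where "P2 = (\<integral>\<^sup>+\<omega>. indicator {..a/2} (R m \<omega>) \<partial>M)"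
  have P1pos: "P1 > 0" unfolding P1_def using a by (intro pos_S1_small) auto
  have P1le: "P1 \<le> 1"
  proof -
    have "P1 \<le> (\<integral>\<^sup>+\<omega>. 1 \<partial>M)" unfolding P1_def by (intro nn_integral_mono) (auto split: split_indicator)
    then show ?thesis by (simp add: emeasure_space_1)
  qed
  have P2ge: "P2 \<ge> ennreal (1/2)"
  proof -
    have S: "{\<omega> \<in> space M. R m \<omega> \<le> a/2} \<in> sets M" by measurable
    have "P2 = (\<integral>\<^sup>+\<omega>. indicator {\<omega> \<in> space M. R m \<omega> \<le> a/2} \<omega> \<partial>M)"
      unfolding P2_def by (intro nn_integral_cong) (auto split: split_indicator)
    also have "\<dots> = ennreal (prob {\<omega> \<in> space M. R m \<omega> \<le> a/2})"
      using S by (simp add: emeasure_eq_measure)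
    finally have P2eq: "P2 = ennreal (prob {\<omega> \<in> space M. R m \<omega> \<le> a/2})" .
    have "prob {\<omega> \<in> space M. R m \<omega> \<le> a/2} \<ge> 1 - tailF (Suc m) / (a/2)"
      using a m by (intro prob_R_le) auto
    moreover have "tailF (Suc m) / (a/2) \<le> 1/2"
      using N m a by (auto simp: field_simps less_imp_le)
    ultimately show ?thesis unfolding P2eq by (intro ennreal_leI) auto
  qed
  obtain p1 where p1: "P1 = ennreal p1" "p1 \<ge> 0"
    using P1le by (cases P1) (auto simp: top_unique)
  have p1pos: "p1 > 0" using P1pos p1 by auto
  have main: "ennreal (p1 / 2) \<le> Phi k a" if k: "k \<ge> m" for k
  proof -
    have sumR: "AE \<omega> in M. summable (\<lambda>l. \<tau> (Suc m + l) \<omega>)" using tail_summable_AE(1)[of "Suc m"] m by simp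
    have AEle: "AE \<omega> in M. S1 k \<omega> \<le> S1 m \<omega> + R m \<omega>"
      using sumR tau_nonneg_AE_all
    proof eventually_elim
      case (elim \<omega>)
      have "S1 k \<omega> = S1 m \<omega> + (\<Sum>l\<in>{Suc m..k}. \<tau> l \<omega>)"
      proof -
        have "{Suc x0..k} = {Suc x0..m} \<union> {Suc m..k}" using k m by auto
        then show ?thesis unfolding S1_def by (simp add: sum.union_disjoint ivl_disj_int)
      qed
      also have "(\<Sum>l\<in>{Suc m..k}. \<tau> l \<omega>) = (\<Sum>i<k - m. \<tau> (Suc m + i) \<omega>)"
        by (rule sum_shift_Suc)
      also have "\<dots> \<le> R m \<omega>" unfolding R_def using elim m by (intro sum_le_suminf) auto
      finally show ?case by simp
    qed
    have "P1 * P2 = (\<integral>\<^sup>+\<omega>. indicator {..a/2} (S1 m \<omega>) * indicator {..a/2} (R m \<omega>) \<partial>M)"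
      unfolding P1_def P2_def
      by (rule indep_nn_prod[OF indep_S1_R[OF m(1)], symmetric]) auto
    also have "\<dots> \<le> Phi k a"
      unfolding Phi_def using AEle S1_nonneg_AE[of k]
    proof (intro nn_integral_mono_AE, eventually_elim)
      case (elim \<omega>)
      show ?case
      proof (cases "S1 m \<omega> \<le> a/2 \<and> R m \<omega> \<le> a/2")
        case True
        then have "S1 k \<omega> \<le> a" using elim by simp
        moreover have "1 \<le> exp (c * S1 k \<omega>)" using elim c_pos by simp
        ultimately show ?thesis using True by simp
      next
        case False then show ?thesis by (auto split: split_indicator)
      qed
    qed
    finally have "P1 * P2 \<le> Phi k a" .
    moreover have "ennreal (p1 / 2) \<le> P1 * P2"
    proof -
      have "ennreal (p1 / 2) = P1 * ennreal (1/2)" using p1 ennreal_mult[of p1 "1/2"] by simp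
      also have "\<dots> \<le> P1 * P2" using P2ge by (intro mult_left_mono) auto
      finally show ?thesis .
    qed
    ultimately show ?thesis by simp
  qed
  show ?thesis using p1pos main by (intro exI[of _ "p1/2"]) auto
qed


definition Psi :: "nat \<Rightarrow> real \<Rightarrow> real" where "Psi k t = enn2real (Phi k t)"

lemma Phi_Psi: "Phi k t = ennreal (Psi k t)"
proof -
  have "Phi k t \<noteq> \<infinity>" using Phi_le_Kc[of k t] by (auto simp: top_unique)
  then show ?thesis by (simp add: Psi_def ennreal_enn2real less_top)
qed

lemma Psi_nonneg: "0 \<le> Psi k t" by (simp add: Psi_def)

lemma Psi_mono: "s \<le> t \<Longrightarrow> Psi k s \<le> Psi k t"
  using Phi_mono[of s t k] by (simp add: Phi_Psi Psi_nonneg)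

lemma Psi_lip: "k \<ge> Suc x0 \<Longrightarrow> s \<le> t \<Longrightarrow> Psi k t \<le> Psi k s + F (Suc x0) * Kc * (t - s)"
proof -
  assume k: "k \<ge> Suc x0" and st: "s \<le> t"
  have "ennreal (Psi k t) \<le> ennreal (Psi k s) + ennreal (F (Suc x0) * (t - s) * Kc)"
    using Phi_lip[OF k st] by (simp add: Phi_Psi)
  also have "\<dots> = ennreal (Psi k s + F (Suc x0) * (t - s) * Kc)"
    using st F_pos[of "Suc x0"] Psi_nonneg by (intro ennreal_plus[symmetric]) (auto simp: Kc_def)
  finally have le: "ennreal (Psi k t) \<le> ennreal (Psi k s + F (Suc x0) * (t - s) * Kc)" .
  have nn: "0 \<le> Psi k s + F (Suc x0) * (t - s) * Kc"
    using st F_pos[of "Suc x0"] Psi_nonneg[of k s] by (simp add: Kc_def)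
  have "Psi k t \<le> Psi k s + F (Suc x0) * (t - s) * Kc" using le ennreal_le_iff[OF nn] by blast
  then show ?thesis by (simp add: algebra_simps)
qed

lemma Psi_cont: "k \<ge> Suc x0 \<Longrightarrow> continuous_on UNIV (Psi k)"
proof -
  assume k: "k \<ge> Suc x0"
  have "(F (Suc x0) * Kc)-lipschitz_on UNIV (Psi k)"
  proof (rule lipschitz_onI)
    fix x y :: real
    show "dist (Psi k x) (Psi k y) \<le> F (Suc x0) * Kc * dist x y"
    proof (cases "x \<le> y")
      case True
      then show ?thesis using Psi_lip[OF k True] Psi_mono[OF True, of k] by (simp add: dist_real_def)
    next
      case False
      then have "y \<le> x" by simp
      then show ?thesis using Psi_lip[OF k \<open>y \<le> x\<close>] Psi_mono[OF \<open>y \<le> x\<close>, of k] by (simp add: dist_real_def)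
    qed
    show "0 \<le> F (Suc x0) * Kc" using F_pos[of "Suc x0"] by (simp add: Kc_def)
  qed
  then show ?thesis by (rule lipschitz_on_continuous_on)
qed


lemma gk_eq:
  assumes k: "k \<ge> Suc x0"
    and D: "distributed M lborel (\<lambda>\<omega>. \<Sum>l=x0..k. \<tau> l \<omega>) (\<lambda>t. ennreal (gk t))"
    and nn: "\<forall>t. 0 \<le> gk t" and cont: "continuous_on {0<..} gk"
  shows "\<forall>t\<in>{0<..}. gk t = c * exp (- c * t) * Psi k t"
proof (rule cont_ae_eq)
  show "open {0::real<..}" by simp
  show "continuous_on {0<..} gk" by fact
  show "continuous_on {0<..} (\<lambda>t. c * exp (- c * t) * Psi k t)"
    using Psi_cont[OF k] by (intro continuous_intros) (auto intro: continuous_on_subset)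
  have "AE t in lborel. ennreal (gk t) = ennreal (c * exp (- c * t)) * Phi k t"
    using k by (intro gk_repr D) auto
  then show "AE t in lborel. t \<in> {0<..} \<longrightarrow> gk t = c * exp (- c * t) * Psi k t"
  proof eventually_elim
    case (elim t)
    then have "ennreal (gk t) = ennreal (c * exp (- c * t) * Psi k t)"
      using c_pos Psi_nonneg[of k t] by (simp add: Phi_Psi ennreal_mult[symmetric])
    then show ?case using nn c_pos Psi_nonneg[of k t] by (subst (asm) ennreal_inj) auto
  qed
qed

lemma g_upper:
  assumes k: "k \<ge> Suc x0"
    and D: "distributed M lborel (\<lambda>\<omega>. \<Sum>l=x0..k. \<tau> l \<omega>) (\<lambda>t. ennreal (gk t))"
    and nn: "\<forall>t. 0 \<le> gk t" and cont: "continuous_on {0<..} gk"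
    and Dg: "distributed M lborel (\<lambda>\<omega>. \<Sum>l. \<tau> (x0 + l) \<omega>) (\<lambda>t. ennreal (g t))"
    and gcont: "continuous_on {0<..} g"
  shows "\<forall>t\<in>{0<..}. g t \<le> exp (c * tailD (Suc k)) * gk t"
proof (rule cont_ae_le)
  have eq: "\<forall>t\<in>{0<..}. gk t = c * exp (- c * t) * Psi k t" by (rule gk_eq[OF k D nn cont])
  show "open {0::real<..}" by simp
  show "continuous_on {0<..} g" by fact
  show "continuous_on {0<..} (\<lambda>t. exp (c * tailD (Suc k)) * gk t)"
    using cont by (intro continuous_intros)
  have k0: "k \<ge> x0" using k by simp
  have "AE t in lborel. ennreal (g t) = ennreal (c * exp (- c * t)) * PhiT k t"
    by (rule g_repr[OF k0 Dg])
  then show "AE t in lborel. t \<in> {0<..} \<longrightarrow> g t \<le> exp (c * tailD (Suc k)) * gk t"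
  proof eventually_elim
    case (elim t)
    show ?case
    proof
      assume t: "t \<in> {0<..}"
      have "ennreal (g t) \<le> ennreal (c * exp (- c * t)) * (Phi k t * ennreal (exp (c * tailD (Suc k))))"
        unfolding elim by (intro mult_left_mono PhiT_upper[OF k0]) auto
      also have "\<dots> = ennreal (exp (c * tailD (Suc k)) * (c * exp (- c * t) * Psi k t))"
        using c_pos Psi_nonneg[of k t] by (simp add: Phi_Psi ennreal_mult[symmetric] mult_ac)
      also have "\<dots> = ennreal (exp (c * tailD (Suc k)) * gk t)" using eq t by simp
      finally show "g t \<le> exp (c * tailD (Suc k)) * gk t"
        using nn by (subst (asm) ennreal_le_iff) auto
    qed
  qed
qed

lemma g_lower:
  assumes k: "k \<ge> Suc x0" and a: "0 < a" and d: "0 \<le> \<delta>" and p: "0 < p" and pk: "p \<le> Psi k a"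
    and D: "distributed M lborel (\<lambda>\<omega>. \<Sum>l=x0..k. \<tau> l \<omega>) (\<lambda>t. ennreal (gk t))"
    and nn: "\<forall>t. 0 \<le> gk t" and cont: "continuous_on {0<..} gk"
    and Dg: "distributed M lborel (\<lambda>\<omega>. \<Sum>l. \<tau> (x0 + l) \<omega>) (\<lambda>t. ennreal (g t))"
    and gnn: "\<forall>t. 0 \<le> g t" and gcont: "continuous_on {0<..} g"
  shows "\<forall>t\<in>{a<..}. (1 - F (Suc x0) * Kc * \<delta> / p) * prob {\<omega> \<in> space M. R k \<omega> \<le> \<delta>} * gk t \<le> g t"
proof (rule cont_ae_le)
  let ?L = "F (Suc x0) * Kc"
  let ?P = "prob {\<omega> \<in> space M. R k \<omega> \<le> \<delta>}"
  have Lnn: "0 \<le> ?L" using F_pos[of "Suc x0"] by (simp add: Kc_def)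
  have eq: "\<forall>t\<in>{0<..}. gk t = c * exp (- c * t) * Psi k t" by (rule gk_eq[OF k D nn cont])
  show "open {a<..}" by simp
  show "continuous_on {a<..} g" using a by (intro continuous_on_subset[OF gcont]) auto
  show "continuous_on {a<..} (\<lambda>t. (1 - ?L * \<delta> / p) * ?P * gk t)"
    using cont a by (intro continuous_intros) (auto intro: continuous_on_subset)
  have k0: "k \<ge> x0" using k by simp
  have "AE t in lborel. ennreal (g t) = ennreal (c * exp (- c * t)) * PhiT k t"
    by (rule g_repr[OF k0 Dg])
  then show "AE t in lborel. t \<in> {a<..} \<longrightarrow> (1 - ?L * \<delta> / p) * ?P * gk t \<le> g t"
  proof eventually_elim
    case (elim t)
    show ?case
    proof
      assume t: "t \<in> {a<..}"
      have Pt: "p \<le> Psi k t" using pk Psi_mono[of a t k] t by auto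
      have "Psi k t \<le> Psi k (t - \<delta>) + ?L * \<delta>" using Psi_lip[OF k, of "t - \<delta>" t] d by simp
      moreover have "?L * \<delta> \<le> ?L * \<delta> / p * Psi k t"
      proof -
        have "?L * \<delta> * 1 \<le> ?L * \<delta> * (Psi k t / p)"
          using Pt p Lnn d by (intro mult_left_mono) auto
        then show ?thesis by simp
      qed
      ultimately have Pl: "(1 - ?L * \<delta> / p) * Psi k t \<le> Psi k (t - \<delta>)" by (simp add: algebra_simps)
      have P0: "0 \<le> ?P" by simp
      have "ennreal (c * exp (- c * t) * (Psi k (t - \<delta>) * ?P)) = ennreal (c * exp (- c * t)) * (Phi k (t - \<delta>) * ennreal ?P)"
        using c_pos Psi_nonneg[of k "t - \<delta>"] by (simp add: Phi_Psi ennreal_mult[symmetric])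
      also have "\<dots> \<le> ennreal (c * exp (- c * t)) * PhiT k t"
        by (intro mult_left_mono PhiT_lower[OF k0 d]) auto
      also have "\<dots> = ennreal (g t)" using elim by simp
      finally have "c * exp (- c * t) * (Psi k (t - \<delta>) * ?P) \<le> g t"
        using gnn by (subst (asm) ennreal_le_iff) auto
      moreover have "(1 - ?L * \<delta> / p) * ?P * gk t \<le> c * exp (- c * t) * (Psi k (t - \<delta>) * ?P)"
      proof -
        have "gk t = c * exp (- c * t) * Psi k t" using eq t a by auto
        then have "(1 - ?L * \<delta> / p) * ?P * gk t = (c * exp (- c * t) * ?P) * ((1 - ?L * \<delta> / p) * Psi k t)"
          by (simp add: mult_ac)
        also have "\<dots> \<le> (c * exp (- c * t) * ?P) * Psi k (t - \<delta>)"
          using Pl c_pos P0 by (intro mult_left_mono) auto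
        finally show ?thesis by (simp add: mult_ac)
      qed
      ultimately show "(1 - ?L * \<delta> / p) * ?P * gk t \<le> g t" by linarith
    qed
  qed
qed


lemma main:
  assumes gk_dens: "\<forall>k\<ge>x0. distributed M lborel (\<lambda>\<omega>. \<Sum>l=x0..k. \<tau> l \<omega>) (\<lambda>t. ennreal (gk k t))"
    and gk_nonneg: "\<forall>k\<ge>x0. \<forall>t. 0 \<le> gk k t"
    and gk_cont: "\<forall>k\<ge>x0. continuous_on {0<..} (gk k)"
    and g_dens: "distributed M lborel (\<lambda>\<omega>. \<Sum>l. \<tau> (x0 + l) \<omega>) (\<lambda>t. ennreal (g t))"
    and g_nonneg: "\<forall>t. 0 \<le> g t"
    and g_cont: "continuous_on {0<..} g"
    and t0: "t0 > 0"
  shows "uniform_limit {t0..} (\<lambda>k t. gk k t / g t) (\<lambda>t. 1) sequentially"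
  unfolding uniform_limit_iff
proof (intro allI impI)
  fix \<epsilon> :: real assume \<epsilon>: "\<epsilon> > 0"
  define e where "e = min \<epsilon> (1/2)"
  have e: "0 < e" "e < 1" "e \<le> \<epsilon>" using \<epsilon> by (auto simp: e_def)
  define a where "a = t0 / 2"
  have a: "0 < a" "a < t0" using t0 by (auto simp: a_def)
  obtain p m0 where p: "p > 0" and pm: "\<And>k. k \<ge> m0 \<Longrightarrow> ennreal p \<le> Phi k a"
    using Phi_pos[OF a(1)] by blast
  have pPsi: "p \<le> Psi k a" if "k \<ge> m0" for k
    using pm[OF that] Psi_nonneg[of k a] by (simp add: Phi_Psi)
  define \<eta> where "\<eta> = e / 4"
  have \<eta>: "0 < \<eta>" "\<eta> < 1" using e by (auto simp: \<eta>_def)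
  define L where "L = F (Suc x0) * Kc"
  have L: "L > 0" using F_pos[of "Suc x0"] by (simp add: L_def Kc_def)
  define \<delta> where "\<delta> = \<eta> * p / L"
  have \<delta>: "\<delta> > 0" using \<eta> p L by (simp add: \<delta>_def)
  have Ld: "L * \<delta> / p = \<eta>" using L p by (simp add: \<delta>_def)
  obtain N1 where N1: "\<forall>n\<ge>N1. tailF (Suc n) < \<eta> * \<delta>"
    using tailF_small[of "\<eta> * \<delta>"] \<eta> \<delta> by auto
  have ln_pos: "ln (1 + e) / c > 0" using e c_pos by simp
  obtain N2 where N2: "\<forall>n\<ge>N2. tailD (Suc n) < ln (1 + e) / c"
    using tailD_small[OF ln_pos] by auto
  define K0 where "K0 = max (Suc x0) (max m0 (max N1 N2))"
  show "\<forall>\<^sub>F k in sequentially. \<forall>t\<in>{t0..}. dist (gk k t / g t) 1 < \<epsilon>"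
  proof (rule eventually_sequentiallyI[of K0], intro ballI)
    fix k t assume k: "K0 \<le> k" and t: "t \<in> {t0..}"
    have kx: "k \<ge> Suc x0" "k \<ge> m0" "k \<ge> N1" "k \<ge> N2" using k by (auto simp: K0_def)
    have kx0: "k \<ge> x0" using kx by simp
    have D: "distributed M lborel (\<lambda>\<omega>. \<Sum>l=x0..k. \<tau> l \<omega>) (\<lambda>t. ennreal (gk k t))" using gk_dens kx0 by auto
    have nn: "\<forall>t. 0 \<le> gk k t" using gk_nonneg kx0 by auto
    have cont: "continuous_on {0<..} (gk k)" using gk_cont kx0 by auto
    define P where "P = prob {\<omega> \<in> space M. R k \<omega> \<le> \<delta>}"
    have P: "P > 1 - \<eta>"
    proof -
      have "P \<ge> 1 - tailF (Suc k) / \<delta>" unfolding P_def by (rule prob_R_le[OF kx0 \<delta>])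
      moreover have "tailF (Suc k) / \<delta> < \<eta>" using N1 kx \<delta> by (auto simp: field_simps)
      ultimately show ?thesis by simp
    qed
    define A where "A = (1 - \<eta>) * P"
    have A: "A > 1 / (1 + e)"
    proof -
      have "(1 - \<eta>) * (1 - \<eta>) < (1 - \<eta>) * P" using P \<eta> by (intro mult_strict_left_mono) auto
      moreover have "1 / (1 + e) < (1 - \<eta>) * (1 - \<eta>)" unfolding \<eta>_def by (rule eta_ineq[OF e(1,2)])
      ultimately show ?thesis by (simp add: A_def)
    qed
    define B where "B = exp (c * tailD (Suc k))"
    have B: "B < 1 + e"
    proof -
      have "c * tailD (Suc k) < ln (1 + e)" using N2 kx c_pos by (auto simp: field_simps)
      then have "B < exp (ln (1 + e))" unfolding B_def by simp
      then show ?thesis using e by simp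
    qed
    have tpos: "t > 0" "t \<in> {a<..}" using t t0 a by auto
    have eq: "gk k t = c * exp (- c * t) * Psi k t"
      using gk_eq[OF kx(1) D nn cont] tpos by auto
    have G: "gk k t > 0"
    proof -
      have "p \<le> Psi k t" using pPsi[OF kx(2)] Psi_mono[of a t k] tpos by auto
      then have "Psi k t > 0" using p by simp
      then show ?thesis unfolding eq using c_pos by simp
    qed
    have up: "g t \<le> B * gk k t"
      using g_upper[OF kx(1) D nn cont g_dens g_cont] tpos by (auto simp: B_def)
    have lo: "A * gk k t \<le> g t"
      using g_lower[OF kx(1) a(1) less_imp_le[OF \<delta>] p pPsi[OF kx(2)] D nn cont g_dens g_nonneg g_cont] tpos
      by (auto simp: A_def P_def Ld L_def[symmetric])
    have "\<bar>gk k t / g t - 1\<bar> < e" by (rule ratio_bound[OF G lo up A B e(1,2)])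
    then show "dist (gk k t / g t) 1 < \<epsilon>" using e by (simp add: dist_real_def)
  qed
qed

end

theorem lemma3:
  fixes M :: "'a measure"
    and F :: "nat \<Rightarrow> real"
    and x0 :: nat
    and \<tau> :: "nat \<Rightarrow> 'a \<Rightarrow> real"
    and gk :: "nat \<Rightarrow> real \<Rightarrow> real"
    and g :: "real \<Rightarrow> real"
    and t0 :: real
  assumes P: "prob_space M"
    and Fpos: "\<forall>k\<ge>1. F k > 0"
    and Fmono: "strict_mono_on {1..} F \<or> strict_antimono_on {1..} F"
    and Fsum: "summable (\<lambda>k. 1 / F (k + 1))"
    and x0: "x0 \<ge> 1"
    and indep: "prob_space.indep_vars M (\<lambda>_. borel) \<tau> {x0..}"
    and expo: "\<forall>k\<ge>x0. distributed M lborel (\<tau> k) (\<lambda>x. ennreal (exponential_density (F k) x))"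
    and gk_dens: "\<forall>k\<ge>x0. distributed M lborel (\<lambda>\<omega>. \<Sum>l=x0..k. \<tau> l \<omega>) (\<lambda>t. ennreal (gk k t))"
    and gk_nonneg: "\<forall>k\<ge>x0. \<forall>t. 0 \<le> gk k t"
    and gk_cont: "\<forall>k\<ge>x0. continuous_on {0<..} (gk k)"
    and g_dens: "distributed M lborel (\<lambda>\<omega>. \<Sum>l. \<tau> (x0 + l) \<omega>) (\<lambda>t. ennreal (g t))"
    and g_nonneg: "\<forall>t. 0 \<le> g t"
    and g_cont: "continuous_on {0<..} g"
    and t0: "t0 > 0"
  shows "uniform_limit {t0..} (\<lambda>k t. gk k t / g t) (\<lambda>t. 1) sequentially"
proof -
  interpret prob_space M by (rule P)
  have mono: "strict_mono_on {1..} F"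
  proof -
    { assume anti: "strict_antimono_on {1..} F"
      have F1: "F 1 > 0" using Fpos by simp
      have le: "F (k + 1) \<le> F 1" for k
      proof (cases k)
        case 0 then show ?thesis by simp
      next
        case (Suc n)
        then have "F 1 > F (k + 1)" using anti by (auto simp: monotone_on_def)
        then show ?thesis by simp
      qed
      have "(\<lambda>k. 1 / F (k + 1)) \<longlonglongrightarrow> 0" using Fsum by (rule summable_LIMSEQ_zero)
      then have "eventually (\<lambda>k. 1 / F (k + 1) < 1 / F 1) sequentially"
        using F1 by (intro order_tendstoD) auto
      then obtain k where "1 / F (k + 1) < 1 / F 1" by (auto simp: eventually_sequentially)
      moreover have "1 / F 1 \<le> 1 / F (k + 1)"
        using le[of k] F1 Fpos by (intro divide_left_mono) auto
      ultimately have False by simp }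
    then show ?thesis using Fmono by blast
  qed
  interpret expo_setup M F x0 \<tau>
    by unfold_locales (use Fpos mono Fsum x0 indep expo in auto)
  show ?thesis
    by (rule main[OF gk_dens gk_nonneg gk_cont g_dens g_nonneg g_cont t0])
qed

end
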